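(* The family of partial orders $\mathfrak{P}=\{\tilde{\mathcal{P}}_i:i\in\mathbb{N}\}$ is both $E_0$-learnable and $E_{range}$-learnable, but it is not $\mathbf{nUs}$-learnable.
   Context: Partial orders are structures in the language $\{\leq\}$. For $k>0$, $\mathcal{P}_k$ is the partial order on $\{0,\dots,2k+1\}$ that is the reflexive transitive closure of the relations $2i\leq 2i+2$ for $i<k$ and $2i\leq 2i+1$ for $i\leq k$. $\mathcal{P}_0$ is the partial order on $\mathbb{N}$ that is the reflexive transitive closure of $2i\leq 2i+2$ for all $i$ and $2j\leq 2j-1$ for all $j>0$. For a partial order $L$, $\tilde{L}$ is $L$ together with infinitely many new elements that are pairwise incomparable and incomparable to the elements of $L$ (presented with domain $\mathbb{N}$). All structures are countable, have domain $\mathbb{N}$, and are identified with their atomic diagrams (elements of $2^{\mathbb{N}}$). A family of structures $\mathfrak{K}$ is a countable set of pairwise nonisomorphic such structures; $\mathcal{S}\restriction_s$ is the finite substructure on $\{0,\dots,s\}$; $\mathrm{LD}(\mathfrak{K})\subseteq2^{\mathbb{N}}$ is the set of structures with domain $\mathbb{N}$ isomorphic to a member of $\mathfrak{K}$ (subspace topology). For an equivalence relation $E$ on a space $X$, $\mathfrak{K}$ is $E$-learnable if there is a continuous $\Gamma:\mathrm{LD}(\mathfrak{K})\to X$ with $\mathcal{S}\cong\mathcal{S}'\iff\Gamma(\mathcal{S})E\Gamma(\mathcal{S}')$ on $\mathrm{LD}(\mathfrak{K})$. On $\mathbb{N}^{\mathbb{N}}$: $p\,E_0\,q\iff\exists m\forall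 n\ge m\ p(n)=q(n)$; $p\,E_{range}\,q\iff\{p(m):m\}=\{q(m):m\}$. A learner is an arbitrary function from $\{\mathcal{S}\restriction_s:\mathcal{S}\in\mathrm{LD}(\mathfrak{K})\}$ to $\{\ulcorner\mathcal{A}\urcorner:\mathcal{A}\in\mathfrak{K}\}\cup\{?\}$. $\mathfrak{K}$ is $\mathbf{nUs}$-learnable if some learner $\mathbf{M}$ satisfies: for every $\mathcal{S}\in\mathrm{LD}(\mathfrak{K})$ with $\mathcal{S}\cong\mathcal{A}\in\mathfrak{K}$, $\mathbf{M}(\mathcal{S}\restriction_n)$ is eventually constantly $\ulcorner\mathcal{A}\urcorner$, and once $\mathbf{M}$ first outputs $\ulcorner\mathcal{A}\urcorner$ on $\mathcal{S}$ it outputs $\ulcorner\mathcal{A}\urcorner$ at all later stages. *)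

theory Defs
  imports "HOL-Analysis.Analysis"
begin

text \<open>A countable structure in the language with one binary relation symbol, with domain
  the natural numbers, is identified with (the relevant part of) its atomic diagram, an
  element of Cantor space: the characteristic function of the relation on pairs.\<close>
type_synonym struc = "nat \<times> nat \<Rightarrow> bool"

definition cantor :: "struc topology" where
  "cantor = product_topology (\<lambda>_. discrete_topology (UNIV :: bool set)) UNIV"

definition baire :: "(nat \<Rightarrow> nat) topology" where
  "baire = product_topology (\<lambda>_. discrete_topology (UNIV :: nat set)) UNIV"

definition iso :: "struc \<Rightarrow> struc \<Rightarrow> bool" where
  "iso S T \<longleftrightarrow> (\<exists>f. bij f \<and> (\<forall>x y. S (x, y) = T (f x, f y)))"

definition LD :: "struc set \<Rightarrow> struc set" where
  "LD K = {S. \<exists>A\<in>K. iso S A}"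

definition E_learnable :: "'b topology \<Rightarrow> ('b \<Rightarrow> 'b \<Rightarrow> bool) \<Rightarrow> struc set \<Rightarrow> bool" where
  "E_learnable X E K \<longleftrightarrow>
     (\<exists>\<Gamma>. continuous_map (subtopology cantor (LD K)) X \<Gamma> \<and>
          (\<forall>S\<in>LD K. \<forall>S'\<in>LD K. iso S S' \<longleftrightarrow> E (\<Gamma> S) (\<Gamma> S')))"

definition E0 :: "(nat \<Rightarrow> nat) \<Rightarrow> (nat \<Rightarrow> nat) \<Rightarrow> bool" where
  "E0 p q \<longleftrightarrow> (\<exists>m. \<forall>n\<ge>m. p n = q n)"

definition Erange :: "(nat \<Rightarrow> nat) \<Rightarrow> (nat \<Rightarrow> nat) \<Rightarrow> bool" where
  "Erange p q \<longleftrightarrow> range p = range q"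

definition restr :: "struc \<Rightarrow> nat \<Rightarrow> nat \<times> struc" where
  "restr S s = (s, \<lambda>(x, y). x \<le> s \<and> y \<le> s \<and> S (x, y))"

text \<open>Learners output either a member of the family (standing for its code) or \<open>None\<close> (\<open>?\<close>).\<close>
definition nUs_learnable :: "struc set \<Rightarrow> bool" where
  "nUs_learnable K \<longleftrightarrow>
     (\<exists>M :: nat \<times> struc \<Rightarrow> struc option.
        (\<forall>x. case M x of None \<Rightarrow> True | Some A \<Rightarrow> A \<in> K) \<and>
        (\<forall>S\<in>LD K. \<forall>A\<in>K. iso S A \<longrightarrow>
            (\<exists>n0. \<forall>n\<ge>n0. M (restr S n) = Some A) \<and>
            (\<forall>n. M (restr S n) = Some A \<longrightarrow> (\<forall>m\<ge>n. M (restr S m) = Some A))))"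

definition Pstep :: "nat \<Rightarrow> nat \<Rightarrow> nat \<Rightarrow> bool" where
  "Pstep k a b \<longleftrightarrow>
     (if k = 0 then (even a \<and> b = a + 2) \<or> (even a \<and> a > 0 \<and> b = a - 1)
      else (even a \<and> a div 2 < k \<and> b = a + 2) \<or> (even a \<and> a div 2 \<le> k \<and> b = a + 1))"

definition Prel :: "nat \<Rightarrow> nat \<Rightarrow> nat \<Rightarrow> bool" where
  "Prel k x y \<longleftrightarrow>
     (if k = 0 then (Pstep 0)\<^sup>*\<^sup>* x y
      else x \<le> 2 * k + 1 \<and> y \<le> 2 * k + 1 \<and> (Pstep k)\<^sup>*\<^sup>* x y)"

text \<open>\<open>P~_k\<close> presented with domain \<open>\<nat>\<close>: for \<open>k > 0\<close> the elements \<open>\<ge> 2k+2\<close> are the new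
  ones; for \<open>k = 0\<close> element \<open>n\<close> of \<open>P_0\<close> is \<open>2n\<close> and the odd numbers are the new ones.\<close>
definition Ptilde :: "nat \<Rightarrow> struc" where
  "Ptilde k = (\<lambda>(x, y).
     if k = 0 then (if even x \<and> even y then Prel 0 (x div 2) (y div 2) else x = y)
     else (if x \<le> 2 * k + 1 \<and> y \<le> 2 * k + 1 then Prel k x y else x = y))"

definition Pfam :: "struc set" where
  "Pfam = range Ptilde"

end

theory Submission
  imports Defs "HOL-Library.Countable_Set"
begin


lemma P0_reach: "even a \<Longrightarrow> (Pstep 0)\<^sup>*\<^sup>* a (a + 2*m)"
proof (induction m)
  case 0 then show ?case by simp
next
  case (Suc m)
  have "Pstep 0 (a + 2*m) (a + 2*Suc m)" using Suc.prems by (simp add: Pstep_def)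
  then show ?case using Suc by (meson rtranclp.rtrancl_into_rtrancl)
qed

lemma P0_char: "(Pstep 0)\<^sup>*\<^sup>* a b \<longleftrightarrow> a = b \<or> (even a \<and> a \<le> b + 1)"
proof
  assume "(Pstep 0)\<^sup>*\<^sup>* a b"
  then show "a = b \<or> (even a \<and> a \<le> b + 1)"
  proof (induction rule: rtranclp_induct)
    case base then show ?case by simp
  next
    case (step b c)
    then show ?case unfolding Pstep_def by auto (presburger+)?
  qed
next
  assume h: "a = b \<or> (even a \<and> a \<le> b + 1)"
  show "(Pstep 0)\<^sup>*\<^sup>* a b"
  proof (cases "a = b")
    case True then show ?thesis by simp
  next
    case False
    with h have ea: "even a" and le: "a \<le> b + 1" by auto
    show ?thesis
    proof (cases "even b")
      case True
      then have "b = a + 2 * ((b - a) div 2)" using ea le False by presburger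
      then show ?thesis using P0_reach[OF ea] by metis
    next
      case False
      then have "b + 1 = a + 2 * ((b + 1 - a) div 2)" using ea le by presburger
      then have r: "(Pstep 0)\<^sup>*\<^sup>* a (b+1)" using P0_reach[OF ea] by metis
      have "Pstep 0 (b+1) b" using False by (simp add: Pstep_def)
      then show ?thesis using r by (meson rtranclp.rtrancl_into_rtrancl)
    qed
  qed
qed

lemma Pk_reach: "k > 0 \<Longrightarrow> even a \<Longrightarrow> a + 2*m \<le> 2*k \<Longrightarrow> (Pstep k)\<^sup>*\<^sup>* a (a + 2*m)"
proof (induction m)
  case 0 then show ?case by simp
next
  case (Suc m)
  have "Pstep k (a + 2*m) (a + 2*Suc m)" using Suc.prems by (simp add: Pstep_def) (presburger?)
  then show ?case using Suc by (meson rtranclp.rtrancl_into_rtrancl Suc_leD add_le_mono le_refl mult_le_mono order_trans le_add1 dual_order.trans mult_Suc_right)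
qed

lemma Pk_char: "k > 0 \<Longrightarrow> (Pstep k)\<^sup>*\<^sup>* a b \<longleftrightarrow> a = b \<or> (even a \<and> a \<le> 2*k \<and> a \<le> b \<and> b \<le> 2*k+1)"
proof
  assume k: "k > 0" and r: "(Pstep k)\<^sup>*\<^sup>* a b"
  from r show "a = b \<or> (even a \<and> a \<le> 2*k \<and> a \<le> b \<and> b \<le> 2*k+1)"
  proof (induction rule: rtranclp_induct)
    case base then show ?case by simp
  next
    case (step b c)
    then show ?case using k unfolding Pstep_def by (auto split: if_splits) (presburger+)?
  qed
next
  assume k: "k > 0" and h: "a = b \<or> (even a \<and> a \<le> 2*k \<and> a \<le> b \<and> b \<le> 2*k+1)"
  show "(Pstep k)\<^sup>*\<^sup>* a b"
  proof (cases "a = b")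
    case True then show ?thesis by simp
  next
    case False
    with h have ea: "even a" and le: "a \<le> 2*k" "a \<le> b" "b \<le> 2*k+1" by auto
    show ?thesis
    proof (cases "even b")
      case True
      then have "b = a + 2 * ((b - a) div 2)" "b \<le> 2*k" using ea le by presburger+
      then show ?thesis using Pk_reach[OF k ea] by metis
    next
      case False
      then have "b - 1 = a + 2 * ((b - 1 - a) div 2)" "b - 1 \<le> 2*k" using ea le by presburger+
      then have r: "(Pstep k)\<^sup>*\<^sup>* a (b-1)" using Pk_reach[OF k ea] by metis
      have "Pstep k (b-1) b" using False k le by (simp add: Pstep_def) (presburger?)
      then show ?thesis using r by (meson rtranclp.rtrancl_into_rtrancl)
    qed
  qed
qed

lemma Ptilde_pos: "k > 0 \<Longrightarrow> Ptilde k (x,y) \<longleftrightarrow> x = y \<or> (even x \<and> x \<le> y \<and> y \<le> 2*k+1)"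
  unfolding Ptilde_def Prel_def using Pk_char[of k x y] by auto (presburger+)?

lemma Ptilde_zero: "Ptilde 0 (x,y) \<longleftrightarrow> x = y \<or> (even x \<and> even y \<and> even (x div 2) \<and> x div 2 \<le> y div 2 + 1)"
  unfolding Ptilde_def Prel_def using P0_char[of "x div 2" "y div 2"] by auto (presburger+)?



lemma iso_refl: "iso S S"
  unfolding iso_def by (rule exI[of _ id]) auto

lemma iso_sym: "iso S T \<Longrightarrow> iso T S"
  unfolding iso_def
proof (elim exE conjE)
  fix f assume b: "bij f" and h: "\<forall>x y. S (x, y) = T (f x, f y)"
  show "\<exists>g. bij g \<and> (\<forall>x y. T (x, y) = S (g x, g y))"
    using b h by (intro exI[of _ "inv f"]) (auto simp: bij_imp_bij_inv surj_f_inv_f bij_is_surj)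
qed

lemma iso_trans: "iso S T \<Longrightarrow> iso T U \<Longrightarrow> iso S U"
  unfolding iso_def
proof (elim exE conjE)
  fix f g assume "bij f" "\<forall>x y. S (x, y) = T (f x, f y)" "bij g" "\<forall>x y. T (x, y) = U (g x, g y)"
  then show "\<exists>h. bij h \<and> (\<forall>x y. S (x, y) = U (h x, h y))"
    by (intro exI[of _ "g \<circ> f"]) (auto simp: bij_comp)
qed

lemma extend_bij:
  fixes h :: "nat \<Rightarrow> nat"
  assumes "finite A" "inj_on h A"
  shows "\<exists>f. bij f \<and> (\<forall>x\<in>A. f x = h x)"
proof -
  define B where "B = UNIV - A"
  define C where "C = UNIV - h ` A"
  have iB: "infinite B" unfolding B_def using assms(1) by (simp add: Diff_infinite_finite)
  have iC: "infinite C" unfolding C_def using assms(1) by (simp add: Diff_infinite_finite)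
  have b1: "bij_betw (from_nat_into B) UNIV B" by (rule bij_betw_from_nat_into) (auto simp: iB)
  have b2: "bij_betw (from_nat_into C) UNIV C" by (rule bij_betw_from_nat_into) (auto simp: iC)
  define g where "g = from_nat_into C \<circ> inv_into UNIV (from_nat_into B)"
  have bg: "bij_betw g B C" unfolding g_def using b1 b2 bij_betw_inv_into bij_betw_trans by blast
  define f where "f = (\<lambda>x. if x \<in> A then h x else g x)"
  have "bij_betw f A (h ` A)" unfolding f_def using assms(2)
    by (simp add: bij_betw_def inj_on_def)
  moreover have "bij_betw f B C" unfolding f_def using bg
    by (rule bij_betw_cong[THEN iffD1, rotated]) (auto simp: B_def)
  ultimately have "bij_betw f (A \<union> B) (h ` A \<union> C)"
    by (rule bij_betw_combine) (auto simp: C_def)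
  moreover have "A \<union> B = UNIV" "h ` A \<union> C = UNIV" by (auto simp: B_def C_def)
  ultimately show ?thesis by (intro exI[of _ f]) (auto simp: f_def)
qed

lemma restr_eq: "(\<forall>x\<le>N. \<forall>y\<le>N. S (x,y) = S' (x,y)) \<Longrightarrow> restr S N = restr S' N"
  unfolding restr_def by (auto simp: fun_eq_iff)

lemma cont_local:
  fixes g :: "struc \<Rightarrow> 'a"
  assumes "\<And>S S'. restr S N = restr S' N \<Longrightarrow> g S = g S'"
  shows "continuous_map cantor (discrete_topology UNIV) g"
  unfolding continuous_map
proof (intro conjI allI impI)
  show "g ` topspace cantor \<subseteq> topspace (discrete_topology UNIV)" by simp
  fix U :: "'a set" assume "openin (discrete_topology UNIV) U"
  show "openin cantor {x \<in> topspace cantor. g x \<in> U}"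
  proof (subst openin_subopen, intro ballI)
    fix S assume S: "S \<in> {x \<in> topspace cantor. g x \<in> U}"
    define X where "X = (\<lambda>p::nat\<times>nat. if fst p \<le> N \<and> snd p \<le> N then {S p} else UNIV)"
    have "openin cantor (\<Pi>\<^sub>E i\<in>UNIV. X i)" unfolding cantor_def
    proof (rule product_topology_basis)
      show "openin (discrete_topology UNIV) (X i)" for i by simp
      have "{i. X i \<noteq> topspace (discrete_topology UNIV)} \<subseteq> {..N} \<times> {..N}"
        unfolding X_def by auto
      then show "finite {i. X i \<noteq> topspace (discrete_topology UNIV)}"
        using finite_subset by blast
    qed
    moreover have "S \<in> (\<Pi>\<^sub>E i\<in>UNIV. X i)" unfolding X_def by auto
    moreover have "(\<Pi>\<^sub>E i\<in>UNIV. X i) \<subseteq> {x \<in> topspace cantor. g x \<in> U}"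
    proof
      fix S' assume "S' \<in> (\<Pi>\<^sub>E i\<in>UNIV. X i)"
      then have "\<forall>x\<le>N. \<forall>y\<le>N. S' (x,y) = S (x,y)" unfolding X_def PiE_iff by (metis (no_types, lifting) UNIV_I fst_conv singletonD snd_conv)
      then have "g S' = g S" using assms restr_eq by metis
      then show "S' \<in> {x \<in> topspace cantor. g x \<in> U}" using S by (simp add: cantor_def)
    qed
    ultimately show "\<exists>T. openin cantor T \<and> S \<in> T \<and> T \<subseteq> {x \<in> topspace cantor. g x \<in> U}" by blast
  qed
qed

lemma cont_baire:
  assumes "\<And>n. \<exists>N. \<forall>S S'. restr S N = restr S' N \<longrightarrow> \<Gamma> S n = \<Gamma> S' n"
  shows "continuous_map (subtopology cantor K) baire \<Gamma>"
  unfolding baire_def continuous_map_componentwise_UNIV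
proof
  fix n
  obtain N where "\<forall>S S'. restr S N = restr S' N \<longrightarrow> \<Gamma> S n = \<Gamma> S' n" using assms by blast
  then have "continuous_map cantor (discrete_topology UNIV) (\<lambda>S. \<Gamma> S n)"
    by (intro cont_local[of N]) blast
  then show "continuous_map (subtopology cantor K) (discrete_topology UNIV) (\<lambda>x. \<Gamma> x n)"
    by (rule continuous_map_from_subtopology)
qed



definition nonisol :: "struc \<Rightarrow> nat \<Rightarrow> nat \<Rightarrow> bool" where
  "nonisol S n y \<longleftrightarrow> (\<exists>z\<le>n. z \<noteq> y \<and> (S (y,z) \<or> S (z,y)))"
definition cnt :: "struc \<Rightarrow> nat \<Rightarrow> nat" where
  "cnt S n = card {y. y \<le> n \<and> nonisol S n y}"
definition pat :: "struc \<Rightarrow> nat \<Rightarrow> bool" where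
  "pat S n \<longleftrightarrow> (\<exists>a\<le>n. \<exists>b\<le>n. a \<noteq> b \<and> S (a,b) \<and> (\<forall>y\<le>n. nonisol S n y \<longrightarrow> y = a \<or> S (b,y)))"
definition G0 :: "struc \<Rightarrow> nat \<Rightarrow> nat" where
  "G0 S n = (if pat (snd (restr S n)) n then 0 else cnt (snd (restr S n)) n + 1)"
definition Gr :: "struc \<Rightarrow> nat \<Rightarrow> nat" where
  "Gr S m = min (fst (prod_decode m)) (cnt (snd (restr S (snd (prod_decode m)))) (snd (prod_decode m)))"

lemma nonisol_restr: "y \<le> n \<Longrightarrow> nonisol (snd (restr S n)) n y = nonisol S n y"
  unfolding nonisol_def restr_def by auto

lemma cnt_restr: "cnt (snd (restr S n)) n = cnt S n"
  unfolding cnt_def using nonisol_restr by (metis (no_types, lifting))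

lemma pat_restr: "pat (snd (restr S n)) n = pat S n"
  unfolding pat_def using nonisol_restr[of _ n S] by (auto simp: restr_def)

lemma G0_eq: "G0 S n = (if pat S n then 0 else cnt S n + 1)"
  by (simp add: G0_def cnt_restr pat_restr)

lemma Gr_eq: "Gr S m = min (fst (prod_decode m)) (cnt S (snd (prod_decode m)))"
  by (simp add: Gr_def cnt_restr)

section \<open>Presentations of P_k, k > 0\<close>

locale presk =
  fixes S :: struc and f :: "nat \<Rightarrow> nat" and k :: nat
  assumes b: "bij f" and S: "\<And>x y. S (x,y) = Ptilde k (f x, f y)" and k: "k > 0"
begin

lemma Sx: "S (x,y) \<longleftrightarrow> x = y \<or> (even (f x) \<and> f x \<le> f y \<and> f y \<le> 2*k+1)"
  using S Ptilde_pos[OF k] b by (metis bij_is_inj inj_eq)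

lemma finv: "f (inv f u) = u" using b by (simp add: bij_is_surj surj_f_inv_f)
lemma invf: "inv f (f u) = u" using b by (simp add: bij_is_inj)

definition N where "N = Max (inv f ` {..2*k+1})"

lemma small_le_N: "f y \<le> 2*k+1 \<Longrightarrow> y \<le> N"
  unfolding N_def using invf by (metis Max_ge atMost_iff finite_atMost finite_imageI image_eqI)

lemma nonisol_small: "nonisol S n y \<Longrightarrow> f y \<le> 2*k+1"
  unfolding nonisol_def Sx by auto

lemma nonisol_big: "N \<le> n \<Longrightarrow> f y \<le> 2*k+1 \<Longrightarrow> nonisol S n y"
proof -
  assume n: "N \<le> n" and y: "f y \<le> 2*k+1"
  define z where "z = inv f (if even (f y) then f y + 1 else f y - 1)"
  have fz: "f z = (if even (f y) then f y + 1 else f y - 1)" unfolding z_def by (simp add: finv)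
  have fz2: "f z \<le> 2*k+1" using y unfolding fz by presburger
  have "z \<le> n" using small_le_N[OF fz2] n by simp
  moreover have "f z \<noteq> f y" unfolding fz by presburger
  then have "z \<noteq> y" by blast
  moreover have "S (y,z) \<or> S (z,y)" unfolding Sx fz using y by presburger
  ultimately show ?thesis unfolding nonisol_def by blast
qed

lemma cnt_le: "cnt S n \<le> 2*k+2"
proof -
  have "{y. y \<le> n \<and> nonisol S n y} \<subseteq> f -` {..2*k+1}" using nonisol_small by auto
  moreover have "card (f -` {..2*k+1}) = 2*k+2" using b
    by (simp add: card_vimage_inj bij_is_inj bij_is_surj)
  moreover have "finite (f -` {..2*k+1})" using b
    by (meson bij_is_inj finite_atMost finite_vimageI)
  ultimately show ?thesis unfolding cnt_def by (metis card_mono)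
qed

lemma cnt_eq: "N \<le> n \<Longrightarrow> cnt S n = 2*k+2"
proof -
  assume n: "N \<le> n"
  have "{y. y \<le> n \<and> nonisol S n y} = f -` {..2*k+1}"
  proof (intro set_eqI iffI)
    fix y assume "y \<in> {y. y \<le> n \<and> nonisol S n y}"
    then show "y \<in> f -` {..2*k+1}" using nonisol_small by fastforce
  next
    fix y assume "y \<in> f -` {..2*k+1}"
    then have "f y \<le> 2*k+1" by simp
    then show "y \<in> {y. y \<le> n \<and> nonisol S n y}" using nonisol_big[OF n] small_le_N[of y] n by simp
  qed
  moreover have "card (f -` {..2*k+1}) = 2*k+2" using b
    by (simp add: card_vimage_inj bij_is_inj bij_is_surj)
  ultimately show ?thesis unfolding cnt_def by simp
qed

lemma not_pat: "N \<le> n \<Longrightarrow> \<not> pat S n"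
proof
  assume n: "N \<le> n" and "pat S n"
  then obtain a b where ab: "a \<noteq> b" "S (a,b)" and all: "\<forall>y\<le>n. nonisol S n y \<longrightarrow> y = a \<or> S (b,y)"
    unfolding pat_def by blast
  have fab: "f a \<noteq> f b" using ab b by (metis bij_is_inj inj_eq)
  have ab2: "even (f a)" "f a \<le> f b" "f b \<le> 2*k+1" using ab Sx by auto
  have y: "inv f j \<le> n \<and> nonisol S n (inv f j)" if "j \<le> 2*k+1" for j
    using that small_le_N nonisol_big[OF n] n finv by (metis le_trans)
  have "inv f 0 = a \<or> S (b, inv f 0)" using all y[of 0] by simp
  then have fa: "f a = 0" using fab ab2 unfolding Sx by (auto simp: finv)
  have "inv f 1 = a \<or> S (b, inv f 1)" using all y[of 1] by simp
  then have fb: "f b = 1" using fab fa ab2 unfolding Sx by (auto simp: finv)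
  have "inv f 2 = a \<or> S (b, inv f 2)" using all y[of 2] k by simp
  then show False using fa fb unfolding Sx by (auto simp: finv)
qed

lemma G0_ev: "N \<le> n \<Longrightarrow> G0 S n = 2*k+3"
  using G0_eq not_pat cnt_eq by simp

lemma Gr_range: "range (Gr S) = {..2*k+2}"
proof
  show "range (Gr S) \<subseteq> {..2*k+2}" using Gr_eq cnt_le by (auto simp: min_le_iff_disj)
  show "{..2*k+2} \<subseteq> range (Gr S)"
  proof
    fix j assume "j \<in> {..2*k+2}"
    then have "Gr S (prod_encode (j, N)) = j" using Gr_eq cnt_eq by simp
    then show "j \<in> range (Gr S)" by (metis rangeI)
  qed
qed

end

section \<open>Presentations of P_0\<close>

locale pres0 =
  fixes S :: struc and f :: "nat \<Rightarrow> nat"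
  assumes b: "bij f" and S: "\<And>x y. S (x,y) = Ptilde 0 (f x, f y)"
begin

lemma Sx: "S (x,y) \<longleftrightarrow> x = y \<or> (even (f x) \<and> even (f y) \<and> even (f x div 2) \<and> f x div 2 \<le> f y div 2 + 1)"
  using S Ptilde_zero b by (metis bij_is_inj inj_eq)

lemma finv: "f (inv f u) = u" using b by (simp add: bij_is_surj surj_f_inv_f)

lemma nonisol_even: "nonisol S n y \<Longrightarrow> even (f y)"
  unfolding nonisol_def Sx by auto

lemma pat_ev: "max (inv f 0) (inv f 4) \<le> n \<Longrightarrow> pat S n"
  unfolding pat_def
proof (intro exI conjI)
  assume n: "max (inv f 0) (inv f 4) \<le> n"
  show "inv f 0 \<le> n" "inv f 4 \<le> n" using n by auto
  show "inv f 0 \<noteq> inv f 4" using finv by (metis zero_neq_numeral)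
  show "S (inv f 0, inv f 4)" unfolding Sx by (simp add: finv)
  show "\<forall>y\<le>n. nonisol S n y \<longrightarrow> y = inv f 0 \<or> S (inv f 4, y)"
  proof (intro allI impI)
    fix y assume "y \<le> n" "nonisol S n y"
    then have e: "even (f y)" using nonisol_even by blast
    show "y = inv f 0 \<or> S (inv f 4, y)"
    proof (cases "f y = 0")
      case True then show ?thesis using b by (metis bij_is_inj inv_f_f)
    next
      case False then show ?thesis unfolding Sx using e by (simp add: finv) presburger
    qed
  qed
qed

lemma cnt_unb: "\<exists>n. M \<le> cnt S n"
proof -
  define A where "A = (\<lambda>i. inv f (4*i)) ` {..Suc M}"
  define n where "n = Max A"
  have fA: "finite A" unfolding A_def by simp
  have inj: "inj_on (\<lambda>i. inv f (4*i)) {..Suc M}"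
    by (rule inj_onI) (metis finv mult_left_cancel zero_neq_numeral)
  have cA: "card A = M + 2" unfolding A_def using card_image[OF inj] by simp
  have le: "y \<le> n" if "y \<in> A" for y using that fA n_def by simp
  have "A \<subseteq> {y. y \<le> n \<and> nonisol S n y}"
  proof
    fix y assume yA: "y \<in> A"
    then obtain i where i: "i \<le> Suc M" "y = inv f (4*i)" unfolding A_def by auto
    show "y \<in> {y. y \<le> n \<and> nonisol S n y}"
    proof (cases "i = 0")
      case True
      have "inv f 4 \<in> A" unfolding A_def by (rule image_eqI[of _ _ 1]) auto
      moreover have "inv f 4 \<noteq> y" using True i finv by (metis mult_0_right zero_neq_numeral)
      moreover have "S (y, inv f 4)" using True i unfolding Sx by (simp add: finv)
      ultimately show ?thesis using le yA unfolding nonisol_def by blast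
    next
      case False
      have "inv f 0 \<in> A" unfolding A_def by (rule image_eqI[of _ _ 0]) auto
      moreover have "inv f 0 \<noteq> y" using False i finv by (metis mult_is_0 zero_neq_numeral)
      moreover have "S (inv f 0, y)" using False i unfolding Sx by (simp add: finv)
      ultimately show ?thesis using le yA unfolding nonisol_def by blast
    qed
  qed
  then have "card A \<le> cnt S n" unfolding cnt_def by (intro card_mono) auto
  then show ?thesis using cA by (intro exI[of _ n]) simp
qed

lemma G0_ev: "max (inv f 0) (inv f 4) \<le> n \<Longrightarrow> G0 S n = 0"
  using G0_eq pat_ev by simp

lemma Gr_range: "range (Gr S) = UNIV"
proof -
  have "j \<in> range (Gr S)" for j
  proof -
    obtain n where "j \<le> cnt S n" using cnt_unb by blast
    then have "Gr S (prod_encode (j, n)) = j" using Gr_eq by simp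
    then show ?thesis by (metis rangeI)
  qed
  then show ?thesis by blast
qed

end



definition psi :: "nat \<Rightarrow> nat" where "psi m = (if even m then m else m + 2)"

lemma psi_rel: "(psi m = psi m' \<or> (even (psi m) \<and> psi m \<le> psi m')) \<longleftrightarrow> (m = m' \<or> (even m \<and> m \<le> m'+1))"
  unfolding psi_def by (cases "even m"; cases "even m'") (simp_all; presburger)+

lemma Ptilde0_even: "Ptilde 0 (2*m, 2*m') \<longleftrightarrow> m = m' \<or> (even m \<and> m \<le> m'+1)"
  unfolding Ptilde_zero by simp

lemma Ptilde0_odd1: "odd x \<Longrightarrow> Ptilde 0 (x, y) \<longleftrightarrow> x = y"
  unfolding Ptilde_zero by auto
lemma Ptilde0_odd2: "odd y \<Longrightarrow> Ptilde 0 (x, y) \<longleftrightarrow> x = y"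
  unfolding Ptilde_zero by auto

definition gg :: "nat \<Rightarrow> nat \<Rightarrow> nat" where
  "gg k x = (if even x then psi (x div 2) else 2*k+2+x)"

lemma psi_le: "psi m \<le> m + 2" unfolding psi_def by simp
lemma psi_par: "even (psi m) = even m" unfolding psi_def by simp

lemma g_prop:
  assumes "x \<le> n1" "y \<le> n1"
  shows "Ptilde (n1+1) (gg (n1+1) x, gg (n1+1) y) = Ptilde 0 (x,y)"
proof -
  have k: "n1 + 1 > 0" by simp
  note P = Ptilde_pos[OF k]
  show ?thesis
  proof (cases "even x")
    case ex: True
    then obtain m where m: "x = 2*m" by blast
    show ?thesis
    proof (cases "even y")
      case ey: True
      then obtain m' where m': "y = 2*m'" by blast
      have "psi m' \<le> 2*(n1+1)+1" using psi_le[of m'] assms m' by simp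
      then show ?thesis unfolding P Ptilde0_even m m' gg_def using psi_rel[of m m'] psi_par
        by (simp add: psi_par)
    next
      case ey: False
      have "psi m \<le> 2*(n1+1)+1" using psi_le[of m] assms m by simp
      then show ?thesis unfolding P Ptilde0_odd2[OF ey] gg_def using ex ey m assms by auto
    qed
  next
    case ex: False
    show ?thesis
    proof (cases "even y")
      case ey: True
      then obtain m' where m': "y = 2*m'" by blast
      have "psi m' \<le> 2*(n1+1)+1" using psi_le[of m'] assms m' by simp
      then show ?thesis unfolding P Ptilde0_odd1[OF ex] gg_def using ex ey m' assms by auto
    next
      case ey: False
      then show ?thesis unfolding P Ptilde0_odd1[OF ex] gg_def using ex ey by auto
    qed
  qed
qed

lemma gg_inj: "inj_on (gg (n1+1)) {..n1}"
proof (rule inj_onI)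
  fix x y assume "x \<in> {..n1}" "y \<in> {..n1}" "gg (n1+1) x = gg (n1+1) y"
  then have "Ptilde 0 (x,y)" "Ptilde 0 (y,x)" using g_prop[of x n1 y] g_prop[of y n1 x]
    by (auto simp: Ptilde_pos)
  then show "x = y" unfolding Ptilde_zero by auto presburger?
qed

definition chi :: "nat \<Rightarrow> nat" where "chi a = (if even a then a + 2 else a)"
definition phi :: "nat \<Rightarrow> nat \<Rightarrow> nat" where
  "phi k a = (if a \<le> 2*k+1 then 2 * chi a else 2*a+1)"

lemma chi_rel: "(chi a = chi b \<or> (even (chi a) \<and> chi a \<le> chi b + 1)) \<longleftrightarrow> (a = b \<or> (even a \<and> a \<le> b))"
  unfolding chi_def by (cases "even a"; cases "even b") (simp_all; presburger)+

lemma phi_inj: "inj (phi k)"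
proof (rule injI)
  fix a b assume "phi k a = phi k b"
  then show "a = b" unfolding phi_def chi_def by (auto split: if_splits) presburger+
qed

lemma phi_prop:
  assumes k: "(k::nat) > 0"
  shows "Ptilde 0 (phi k a, phi k b) = Ptilde k (a,b)"
proof (cases "a \<le> 2*k+1")
  case a: True
  show ?thesis
  proof (cases "b \<le> 2*k+1")
    case True
    then show ?thesis unfolding Ptilde_pos[OF k] phi_def using a Ptilde0_even chi_rel by simp
  next
    case False
    have o: "odd (phi k b)" using False unfolding phi_def by simp
    have "even (phi k a)" using a unfolding phi_def by simp
    then have "phi k a \<noteq> phi k b" using o by auto
    then show ?thesis unfolding Ptilde_pos[OF k] Ptilde0_odd2[OF o]
      using a False by auto
  qed
next
  case a: False
  have o: "odd (phi k a)" using a unfolding phi_def by simp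
  have "Ptilde 0 (phi k a, phi k b) \<longleftrightarrow> a = b" unfolding Ptilde0_odd1[OF o] using phi_inj by (metis injD)
  then show ?thesis unfolding Ptilde_pos[OF k] using a by auto
qed



lemma LD_Pfam: "S \<in> LD Pfam \<longleftrightarrow> (\<exists>k. iso S (Ptilde k))"
  unfolding LD_def Pfam_def by auto

definition V :: "nat \<Rightarrow> nat" where "V k = (if k = 0 then 0 else 2*k+3)"
definition R :: "nat \<Rightarrow> nat set" where "R k = (if k = 0 then UNIV else {..2*k+2})"

lemma V_inj: "V k = V j \<Longrightarrow> k = j" unfolding V_def by (auto split: if_splits)
lemma R_inj: "R k = R j \<Longrightarrow> k = j"
proof -
  assume h: "R k = R j"
  have fin: "k > 0 \<Longrightarrow> finite (R k)" for k unfolding R_def by simp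
  show "k = j"
  proof (cases "k = 0 \<or> j = 0")
    case True then show ?thesis using h fin unfolding R_def
      by (metis finite_atMost infinite_UNIV_nat neq0_conv)
  next
    case False
    then have "{..2*k+2} = {..2*j+2}" using h unfolding R_def by simp
    then show ?thesis by (metis Suc_eq_plus1 atMost_eq_iff add_right_cancel mult_left_cancel zero_neq_numeral)
  qed
qed

lemma G0_inv: "iso S (Ptilde k) \<Longrightarrow> \<exists>N. \<forall>n\<ge>N. G0 S n = V k"
proof -
  assume "iso S (Ptilde k)"
  then obtain f where f: "bij f" "\<forall>x y. S (x, y) = Ptilde k (f x, f y)" unfolding iso_def by blast
  show ?thesis
  proof (cases "k = 0")
    case True
    interpret pres0 S f using f True by unfold_locales auto
    show ?thesis using G0_ev True by (intro exI[of _ "max (inv f 0) (inv f 4)"]) (auto simp: V_def)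
  next
    case False
    interpret presk S f k using f False by unfold_locales auto
    show ?thesis using G0_ev False by (auto simp: V_def)
  qed
qed

lemma Gr_inv: "iso S (Ptilde k) \<Longrightarrow> range (Gr S) = R k"
proof -
  assume "iso S (Ptilde k)"
  then obtain f where f: "bij f" "\<forall>x y. S (x, y) = Ptilde k (f x, f y)" unfolding iso_def by blast
  show ?thesis
  proof (cases "k = 0")
    case True
    interpret pres0 S f using f True by unfold_locales auto
    show ?thesis using Gr_range True by (auto simp: R_def)
  next
    case False
    interpret presk S f k using f False by unfold_locales auto
    show ?thesis using Gr_range False by (auto simp: R_def)
  qed
qed

lemma E0_part: "E_learnable baire E0 Pfam"
  unfolding E_learnable_def
proof (intro exI conjI)
  show "continuous_map (subtopology cantor (LD Pfam)) baire G0"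
  proof (rule cont_baire)
    fix n show "\<exists>N. \<forall>S S'. restr S N = restr S' N \<longrightarrow> G0 S n = G0 S' n"
      by (intro exI[of _ n]) (auto simp: G0_def)
  qed
  show "\<forall>S\<in>LD Pfam. \<forall>S'\<in>LD Pfam. iso S S' = E0 (G0 S) (G0 S')"
  proof (intro ballI iffI)
    fix S S' assume "S \<in> LD Pfam" "S' \<in> LD Pfam" "iso S S'"
    then obtain k where k: "iso S (Ptilde k)" using LD_Pfam by blast
    then have k': "iso S' (Ptilde k)" using \<open>iso S S'\<close> iso_sym iso_trans by blast
    obtain N where N: "\<forall>n\<ge>N. G0 S n = V k" using G0_inv[OF k] by blast
    obtain N' where N': "\<forall>n\<ge>N'. G0 S' n = V k" using G0_inv[OF k'] by blast
    show "E0 (G0 S) (G0 S')" unfolding E0_def using N N' by (intro exI[of _ "max N N'"]) auto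
  next
    fix S S' assume "S \<in> LD Pfam" "S' \<in> LD Pfam" "E0 (G0 S) (G0 S')"
    then obtain k j where k: "iso S (Ptilde k)" and j: "iso S' (Ptilde j)" using LD_Pfam by blast
    obtain N where N: "\<forall>n\<ge>N. G0 S n = V k" using G0_inv[OF k] by blast
    obtain N' where N': "\<forall>n\<ge>N'. G0 S' n = V j" using G0_inv[OF j] by blast
    obtain m where m: "\<forall>n\<ge>m. G0 S n = G0 S' n" using \<open>E0 (G0 S) (G0 S')\<close> unfolding E0_def by blast
    have "V k = V j" using N N' m[rule_format, of "max m (max N N')"] by auto
    then have "k = j" by (rule V_inj)
    then show "iso S S'" using k j iso_sym iso_trans by blast
  qed
qed

lemma Er_part: "E_learnable baire Erange Pfam"
  unfolding E_learnable_def
proof (intro exI conjI)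
  show "continuous_map (subtopology cantor (LD Pfam)) baire Gr"
  proof (rule cont_baire)
    fix m show "\<exists>N. \<forall>S S'. restr S N = restr S' N \<longrightarrow> Gr S m = Gr S' m"
      by (intro exI[of _ "snd (prod_decode m)"]) (auto simp: Gr_def)
  qed
  show "\<forall>S\<in>LD Pfam. \<forall>S'\<in>LD Pfam. iso S S' = Erange (Gr S) (Gr S')"
  proof (intro ballI iffI)
    fix S S' assume "S \<in> LD Pfam" "S' \<in> LD Pfam" "iso S S'"
    then obtain k where k: "iso S (Ptilde k)" using LD_Pfam by blast
    then have k': "iso S' (Ptilde k)" using \<open>iso S S'\<close> iso_sym iso_trans by blast
    show "Erange (Gr S) (Gr S')" unfolding Erange_def using Gr_inv[OF k] Gr_inv[OF k'] by simp
  next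
    fix S S' assume "S \<in> LD Pfam" "S' \<in> LD Pfam" "Erange (Gr S) (Gr S')"
    then obtain k j where k: "iso S (Ptilde k)" and j: "iso S' (Ptilde j)" using LD_Pfam by blast
    have "R k = R j" using Gr_inv[OF k] Gr_inv[OF j] \<open>Erange (Gr S) (Gr S')\<close> unfolding Erange_def by simp
    then have "k = j" by (rule R_inj)
    then show "iso S S'" using k j iso_sym iso_trans by blast
  qed
qed

lemma iso_comp: "bij f \<Longrightarrow> iso (\<lambda>p. A (f (fst p), f (snd p))) A"
  unfolding iso_def by auto

lemma nUs_part: "\<not> nUs_learnable Pfam"
proof
  assume "nUs_learnable Pfam"
  then obtain M :: "nat \<times> struc \<Rightarrow> struc option" where
    H: "\<forall>S\<in>LD Pfam. \<forall>A\<in>Pfam. iso S A \<longrightarrow>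
            (\<exists>n0. \<forall>n\<ge>n0. M (restr S n) = Some A) \<and>
            (\<forall>n. M (restr S n) = Some A \<longrightarrow> (\<forall>m\<ge>n. M (restr S m) = Some A))"
    unfolding nUs_learnable_def by blast
  have inP: "Ptilde j \<in> Pfam" for j unfolding Pfam_def by simp
  have inLD: "iso S (Ptilde j) \<Longrightarrow> S \<in> LD Pfam" for S j using LD_Pfam by blast
  have "\<exists>n0. \<forall>n\<ge>n0. M (restr (Ptilde 0) n) = Some (Ptilde 0)"
    using H inP inLD[OF iso_refl] iso_refl by blast
  then obtain n1 where n1: "M (restr (Ptilde 0) n1) = Some (Ptilde 0)" by blast
  define k where "k = n1 + 1"
  have k: "k > 0" unfolding k_def by simp
  obtain f1 where f1: "bij f1" "\<forall>x\<in>{..n1}. f1 x = gg k x"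
    using extend_bij[OF _ gg_inj[of n1]] unfolding k_def by blast
  define T where "T = (\<lambda>p. Ptilde k (f1 (fst p), f1 (snd p)))"
  have isoT: "iso T (Ptilde k)" unfolding T_def using iso_comp[OF f1(1)] .
  have T1: "T (x,y) = Ptilde 0 (x,y)" if "x \<le> n1" "y \<le> n1" for x y
    using that f1(2) g_prop[of x n1 y] unfolding T_def k_def by simp
  obtain n0 where n0: "\<forall>n\<ge>n0. M (restr T n) = Some (Ptilde k)"
    using H inP inLD[OF isoT] isoT by blast
  define n2 where "n2 = max n0 n1"
  have injh: "inj_on (phi k \<circ> f1) {..n2}" using phi_inj f1(1)
    by (meson bij_is_inj comp_inj_on inj_on_subset subset_UNIV)
  obtain e where e: "bij e" "\<forall>x\<in>{..n2}. e x = (phi k \<circ> f1) x"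
    using extend_bij[OF _ injh] by blast
  define S where "S = (\<lambda>p. Ptilde 0 (e (fst p), e (snd p)))"
  have isoS: "iso S (Ptilde 0)" unfolding S_def using iso_comp[OF e(1)] .
  have ST: "S (x,y) = T (x,y)" if "x \<le> n2" "y \<le> n2" for x y
    using that e(2) phi_prop[OF k] unfolding S_def T_def by simp
  have r2: "restr S n2 = restr T n2" using ST by (intro restr_eq) auto
  have r1: "restr S n1 = restr (Ptilde 0) n1" using ST T1 unfolding n2_def by (intro restr_eq) auto
  have lock: "\<forall>n. M (restr S n) = Some (Ptilde 0) \<longrightarrow> (\<forall>m\<ge>n. M (restr S m) = Some (Ptilde 0))"
    using H inP inLD[OF isoS] isoS by blast
  have "M (restr S n2) = Some (Ptilde 0)" using lock n1 r1 unfolding n2_def by (metis max.cobounded2)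
  moreover have "M (restr S n2) = Some (Ptilde k)" using r2 n0 unfolding n2_def by simp
  ultimately have "Ptilde k = Ptilde 0" by simp
  moreover have "Ptilde k (0,1)" using Ptilde_pos[OF k] by simp
  moreover have "\<not> Ptilde 0 (0,1)" by (simp add: Ptilde_zero)
  ultimately show False by simp
qed

theorem mainTheorem13:
  shows "E_learnable baire E0 Pfam \<and> E_learnable baire Erange Pfam \<and> \<not> nUs_learnable Pfam"
  using E0_part Er_part nUs_part by blast

end
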